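(* Let $f$ and $g$ be full-branch Markov maps on $[-1,1]$ which both satisfy the partition spacing condition (P). Suppose in addition that $f$ has bounded distortion with constant $C^{(f)}_1$ and that $g$ has uniform expansion parameter $\lambda^{(g)}=\inf|g'|>0$. Then $g\circ f$ satisfies (P).
   Context: A full-branch Markov map of $[-1,1]$ has disjoint open branch intervals $\mathcal{O}_\iota$, $\iota\in I$ ($I$ countable), covering $[-1,1]$ up to a countable set, with $f|_{\mathcal{O}_\iota}$ extending to a $C^2$ bijection $\hat f_\iota:\overline{\mathcal{O}_\iota}\to[-1,1]$; $v_\iota=\hat f_\iota^{-1}$. Bounded distortion: $C_1=\sup_{\iota,x}|v_\iota''(x)/v_\iota'(x)|<\infty$. Partition spacing condition (P): $\Xi:=\sup\{|\mathcal{O}_\iota|/d(\mathcal{O}_\iota,\sigma):\iota\in I,\ \sigma\in\{-1,1\},\ \sigma\notin\overline{\mathcal{O}_\iota}\}<\infty$. The branch intervals of $g\circ f$ are the interiors of $v^{(f)}_\phi(v^{(g)}_\gamma([-1,1]))$ over pairs of branches $\phi$ of $f$ and $\gamma$ of $g$. *)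

theory Defs
  imports "HOL-Analysis.Analysis"
begin

definition C2_on_interval :: "(real \<Rightarrow> real) \<Rightarrow> real \<Rightarrow> real \<Rightarrow> bool" where
  "C2_on_interval h l r \<longleftrightarrow>
     (\<exists>d1 d2. (\<forall>x\<in>{l..r}. (h has_real_derivative d1 x) (at x within {l..r}) \<and>
                            (d1 has_real_derivative d2 x) (at x within {l..r}))
            \<and> continuous_on {l..r} d2)"

definition full_branch_markov ::
  "(real \<Rightarrow> real) \<Rightarrow> 'i set \<Rightarrow> ('i \<Rightarrow> real) \<Rightarrow> ('i \<Rightarrow> real) \<Rightarrow> ('i \<Rightarrow> real \<Rightarrow> real) \<Rightarrow> bool" where
  "full_branch_markov f I a b fh \<longleftrightarrow>
     countable I \<and>
     (\<forall>i\<in>I. -1 \<le> a i \<and> a i < b i \<and> b i \<le> 1) \<and>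
     (\<forall>i\<in>I. \<forall>j\<in>I. i \<noteq> j \<longrightarrow> {a i<..<b i} \<inter> {a j<..<b j} = {}) \<and>
     countable ({-1..1} - (\<Union>i\<in>I. {a i<..<b i})) \<and>
     (\<forall>i\<in>I. \<forall>x\<in>{a i<..<b i}. fh i x = f x) \<and>
     (\<forall>i\<in>I. bij_betw (fh i) {a i..b i} {-1..1}) \<and>
     (\<forall>i\<in>I. C2_on_interval (fh i) (a i) (b i))"

definition inv_branch :: "('i \<Rightarrow> real) \<Rightarrow> ('i \<Rightarrow> real) \<Rightarrow> ('i \<Rightarrow> real \<Rightarrow> real) \<Rightarrow> 'i \<Rightarrow> real \<Rightarrow> real" where
  "inv_branch a b fh i = inv_into {a i..b i} (fh i)"

definition bounded_distortion ::
  "'i set \<Rightarrow> ('i \<Rightarrow> real) \<Rightarrow> ('i \<Rightarrow> real) \<Rightarrow> ('i \<Rightarrow> real \<Rightarrow> real) \<Rightarrow> bool" where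
  "bounded_distortion I a b fh \<longleftrightarrow>
     (\<exists>C. \<forall>i\<in>I. \<exists>v1 v2. \<forall>x\<in>{-1..1}.
        (inv_branch a b fh i has_real_derivative v1 x) (at x within {-1..1}) \<and>
        (v1 has_real_derivative v2 x) (at x within {-1..1}) \<and>
        \<bar>v2 x / v1 x\<bar> \<le> C)"

definition uniformly_expanding ::
  "(real \<Rightarrow> real) \<Rightarrow> 'i set \<Rightarrow> ('i \<Rightarrow> real) \<Rightarrow> ('i \<Rightarrow> real) \<Rightarrow> bool" where
  "uniformly_expanding f I a b \<longleftrightarrow>
     (\<exists>lam>0. \<forall>i\<in>I. \<forall>x\<in>{a i<..<b i}. lam \<le> \<bar>deriv f x\<bar>)"

definition partition_spacing :: "real set set \<Rightarrow> bool" where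
  "partition_spacing S \<longleftrightarrow>
     (\<exists>\<Xi>. \<forall>U\<in>S. \<forall>\<sigma>\<in>{-1,1::real}. \<sigma> \<notin> closure U \<longrightarrow> diameter U / infdist \<sigma> U \<le> \<Xi>)"

definition branches :: "'i set \<Rightarrow> ('i \<Rightarrow> real) \<Rightarrow> ('i \<Rightarrow> real) \<Rightarrow> real set set" where
  "branches I a b = (\<lambda>i. {a i<..<b i}) ` I"

text \<open>Branch intervals of g o f: interiors of v^f_phi(v^g_gamma([-1,1])).\<close>
definition comp_branches ::
  "'i set \<Rightarrow> ('i \<Rightarrow> real) \<Rightarrow> ('i \<Rightarrow> real) \<Rightarrow> ('i \<Rightarrow> real \<Rightarrow> real) \<Rightarrow>
   'j set \<Rightarrow> ('j \<Rightarrow> real) \<Rightarrow> ('j \<Rightarrow> real) \<Rightarrow> ('j \<Rightarrow> real \<Rightarrow> real) \<Rightarrow> real set set" where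
  "comp_branches Jf af bf fhf Jg ag bg fhg =
     {interior (inv_branch af bf fhf \<phi> ` (inv_branch ag bg fhg \<gamma> ` {-1..1})) | \<phi> \<gamma>. \<phi> \<in> Jf \<and> \<gamma> \<in> Jg}"

end

theory Submission imports Defs begin

lemma inv_deriv_nonzero:
  fixes h :: "real \<Rightarrow> real"
  assumes bij: "bij_betw h {l..r} {-1..1}"
    and dh: "\<And>y. y \<in> {l..r} \<Longrightarrow> (h has_real_derivative d1 y) (at y within {l..r})"
    and dv: "(inv_into {l..r} h has_real_derivative w) (at x within {-1..1})"
    and x: "x \<in> {-1<..<1}"
  shows "w \<noteq> 0"
proof -
  let ?v = "inv_into {l..r} h"
  have img: "?v ` {-1..1} = {l..r}"
    using bij_betw_inv_into[OF bij] by (simp add: bij_betw_def)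
  have vx: "?v x \<in> {l..r}" using img x by auto
  have "(h \<circ> ?v has_real_derivative d1 (?v x) * w) (at x within {-1..1})"
  proof (rule DERIV_image_chain)
    show "(h has_real_derivative d1 (?v x)) (at (?v x) within ?v ` {-1..1})"
      using dh[OF vx] img by simp
  qed (rule dv)
  moreover have "at x within {-1..1} = at x"
    using x by (intro at_within_interior) simp
  ultimately have "(h \<circ> ?v has_real_derivative d1 (?v x) * w) (at x)"
    by simp
  then have "((\<lambda>t. t) has_real_derivative d1 (?v x) * w) (at x)"
    apply (rule has_field_derivative_transform_within_open[where S="{-1<..<1}"])
    using x bij_betw_inv_into_right[OF bij] by simp_all
  then have "d1 (?v x) * w = 1"
    using DERIV_ident DERIV_unique by blast
  then show ?thesis by auto
qed


lemma distortion_aux: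
  fixes v1 v2 :: "real \<Rightarrow> real"
  assumes d1: "\<And>t. t \<in> {-1..1} \<Longrightarrow> (v1 has_real_derivative v2 t) (at t within {-1..1})"
   and C: "\<And>t. t \<in> {-1..1} \<Longrightarrow> \<bar>v2 t / v1 t\<bar> \<le> C"
   and nz: "\<And>t. t \<in> {-1<..<1} \<Longrightarrow> v1 t \<noteq> 0"
   and x: "x \<in> {-1<..<1}" and y: "y \<in> {-1<..<1}" and xy: "x < y"
  shows "\<bar>ln (v1 y ^ 2) - ln (v1 x ^ 2)\<bar> \<le> 4 * C"
proof -
  define D where "D t = 1 / (v1 t ^ 2) * (of_nat 2 * (v2 t * v1 t ^ (2 - Suc 0)))" for t
  have der: "((\<lambda>t. ln (v1 t ^ 2)) has_derivative (*) (D t)) (at t within {x..y})"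
    if t: "x \<le> t" "t \<le> y" for t
  proof -
    have tin: "t \<in> {-1<..<1}" using t x y by auto
    have "(v1 has_real_derivative v2 t) (at t within {x..y})"
      using d1[of t] tin x y by (auto intro: DERIV_subset)
    from DERIV_chain'[OF DERIV_power[OF this, of 2] DERIV_ln_divide]
    have "((\<lambda>t. ln (v1 t ^ 2)) has_real_derivative D t) (at t within {x..y})"
      using nz[OF tin] unfolding D_def by simp
    then show ?thesis by (simp add: has_field_derivative_def)
  qed
  obtain z where z: "z \<in> {x<..<y}" and eq: "ln (v1 y ^ 2) - ln (v1 x ^ 2) = D z * (y - x)"
    using mvt_simple[OF xy der] by auto
  have zin: "z \<in> {-1<..<1}" using z x y by auto
  have "D z = 2 * (v2 z / v1 z)"
    using nz[OF zin] unfolding D_def by (simp add: power2_eq_square field_simps)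
  then have Dz: "\<bar>D z\<bar> \<le> 2 * C" using C[of z] zin by auto
  have "\<bar>y - x\<bar> \<le> 2" using x y by auto
  have "\<bar>ln (v1 y ^ 2) - ln (v1 x ^ 2)\<bar> = \<bar>D z\<bar> * \<bar>y - x\<bar>" by (simp add: eq abs_mult)
  also have "\<dots> \<le> (2 * C) * 2"
    by (rule mult_mono) (use Dz \<open>\<bar>y - x\<bar> \<le> 2\<close> in auto)
  finally show ?thesis by simp
qed

lemma distortion:
  fixes v1 v2 :: "real \<Rightarrow> real"
  assumes d1: "\<And>t. t \<in> {-1..1} \<Longrightarrow> (v1 has_real_derivative v2 t) (at t within {-1..1})"
   and C: "\<And>t. t \<in> {-1..1} \<Longrightarrow> \<bar>v2 t / v1 t\<bar> \<le> C"
   and nz: "\<And>t. t \<in> {-1<..<1} \<Longrightarrow> v1 t \<noteq> 0"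
   and x: "x \<in> {-1<..<1}" and y: "y \<in> {-1<..<1}" and C0: "0 \<le> C"
  shows "\<bar>v1 x\<bar> \<le> exp (2 * C) * \<bar>v1 y\<bar>"
proof -
  have "\<bar>ln (v1 y ^ 2) - ln (v1 x ^ 2)\<bar> \<le> 4 * C"
  proof (cases x y rule: linorder_cases)
    case less then show ?thesis using distortion_aux[OF d1 C nz x y] by blast
  next
    case equal then show ?thesis using C0 by simp
  next
    case greater then show ?thesis using distortion_aux[OF d1 C nz y x] by (simp add: abs_minus_commute)
  qed
  then have "ln (v1 x ^ 2) \<le> 4 * C + ln (v1 y ^ 2)" by linarith
  then have "exp (ln (v1 x ^ 2)) \<le> exp (4 * C + ln (v1 y ^ 2))" by simp
  then have "v1 x ^ 2 \<le> exp (4 * C) * v1 y ^ 2"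
    using nz[OF x] nz[OF y] by (simp add: exp_add)
  also have "exp (4 * C) = (exp (2 * C)) ^ 2"
    by (simp add: power2_eq_square flip: exp_add)
  finally have "v1 x ^ 2 \<le> (exp (2 * C) * \<bar>v1 y\<bar>) ^ 2"
    by (simp add: power_mult_distrib)
  then show ?thesis
    by (metis abs_le_square_iff abs_mult abs_abs abs_exp_cancel)
qed


lemma lip_aux:
  fixes v v1 :: "real \<Rightarrow> real"
  assumes dv: "\<And>t. t\<in>{-1..1} \<Longrightarrow> (v has_real_derivative v1 t) (at t within {-1..1})"
   and up: "\<And>t. t \<in> {-1<..<1} \<Longrightarrow> \<bar>v1 t\<bar> \<le> M"
   and lo: "\<And>t. t \<in> {-1<..<1} \<Longrightarrow> m \<le> \<bar>v1 t\<bar>"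
   and x: "x \<in> {-1..1}" and y: "y \<in> {-1..1}" and xy: "x < y"
  shows "\<bar>v y - v x\<bar> \<le> M * \<bar>y - x\<bar> \<and> m * \<bar>y - x\<bar> \<le> \<bar>v y - v x\<bar>"
proof -
  have der: "(v has_derivative (*) (v1 t)) (at t within {x..y})" if "x \<le> t" "t \<le> y" for t
    using dv[of t] that x y unfolding has_field_derivative_def[symmetric]
    by (auto intro: DERIV_subset)
  obtain z where z: "z \<in> {x<..<y}" and eq: "v y - v x = v1 z * (y - x)"
    using mvt_simple[OF xy der] by auto
  have zin: "z \<in> {-1<..<1}" using z x y by auto
  have e: "\<bar>v y - v x\<bar> = \<bar>v1 z\<bar> * \<bar>y - x\<bar>" by (simp add: eq abs_mult)
  show ?thesis unfolding e using up[OF zin] lo[OF zin]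
    by (auto intro: mult_right_mono)
qed

lemma lip:
  fixes v v1 :: "real \<Rightarrow> real"
  assumes dv: "\<And>t. t\<in>{-1..1} \<Longrightarrow> (v has_real_derivative v1 t) (at t within {-1..1})"
   and up: "\<And>t. t \<in> {-1<..<1} \<Longrightarrow> \<bar>v1 t\<bar> \<le> M"
   and lo: "\<And>t. t \<in> {-1<..<1} \<Longrightarrow> m \<le> \<bar>v1 t\<bar>"
   and x: "x \<in> {-1..1}" and y: "y \<in> {-1..1}"
  shows "\<bar>v y - v x\<bar> \<le> M * \<bar>y - x\<bar> \<and> m * \<bar>y - x\<bar> \<le> \<bar>v y - v x\<bar>"
proof (cases x y rule: linorder_cases)
  case less then show ?thesis using lip_aux[OF dv up lo x y] by blast
next
  case equal then show ?thesis by simp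
next
  case greater then show ?thesis using lip_aux[OF dv up lo y x]
    by (simp add: abs_minus_commute)
qed

lemma comp_branch_bound:
  fixes v v1 :: "real \<Rightarrow> real"
  assumes dv: "\<And>t. t\<in>{-1..1} \<Longrightarrow> (v has_real_derivative v1 t) (at t within {-1..1})"
   and up: "\<And>t. t \<in> {-1<..<1} \<Longrightarrow> \<bar>v1 t\<bar> \<le> M"
   and lo: "\<And>t. t \<in> {-1<..<1} \<Longrightarrow> m \<le> \<bar>v1 t\<bar>"
   and m: "0 < m"
   and cd: "-1 \<le> c" "c < d" "d \<le> 1" and tau: "\<tau> \<in> {-1..1}"
   and nc: "v \<tau> \<notin> closure (interior (v ` {c..d}))"
  shows "\<tau> \<notin> {c..d} \<and> diameter (interior (v ` {c..d})) \<le> M * (d - c) \<and>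
         m * infdist \<tau> {c<..<d} \<le> infdist (v \<tau>) (interior (v ` {c..d}))"
proof -
  have M0: "0 \<le> M" using up[of 0] by auto
  have cont: "continuous_on {c..d} v"
  proof (rule continuous_on_subset[of "{-1..1}"])
    show "continuous_on {-1..1} v"
      unfolding continuous_on_eq_continuous_within
      using dv DERIV_continuous by blast
  qed (use cd in auto)
  obtain p q where img: "v ` {c..d} = {p..q}" and pq: "p \<le> q"
    using continuous_image_closed_interval[OF _ cont] cd by auto
  have L: "\<And>s t. s \<in> {c..d} \<Longrightarrow> t \<in> {c..d} \<Longrightarrow>
      \<bar>v t - v s\<bar> \<le> M * \<bar>t - s\<bar> \<and> m * \<bar>t - s\<bar> \<le> \<bar>v t - v s\<bar>"
    using lip[OF dv up lo] cd by auto
  have "m * \<bar>d - c\<bar> \<le> \<bar>v d - v c\<bar>" using L[of c d] cd by auto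
  moreover have "0 < m * \<bar>d - c\<bar>" using m cd by auto
  ultimately have "v d \<noteq> v c" by auto
  moreover have "v d \<in> {p..q}" "v c \<in> {p..q}" using img cd by auto
  ultimately have pq': "p < q" using pq by auto
  have U: "interior (v ` {c..d}) = {p<..<q}" using img by simp
  have clU: "closure (interior (v ` {c..d})) = {p..q}" using U pq' by simp
  have t1: "\<tau> \<notin> {c..d}"
  proof
    assume "\<tau> \<in> {c..d}"
    then have "v \<tau> \<in> {p..q}" using img by auto
    then show False using nc clU by simp
  qed
  have t2: "diameter (interior (v ` {c..d})) \<le> M * (d - c)"
  proof (rule diameter_le)
    show "interior (v ` {c..d}) \<noteq> {} \<or> 0 \<le> M * (d - c)" using M0 cd by auto
    fix u w assume "u \<in> interior (v ` {c..d})" "w \<in> interior (v ` {c..d})"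
    then have "u \<in> v ` {c..d}" "w \<in> v ` {c..d}" using interior_subset by blast+
    then obtain s t where s: "s \<in> {c..d}" "u = v s" and t: "t \<in> {c..d}" "w = v t" by auto
    have "\<bar>v t - v s\<bar> \<le> M * \<bar>t - s\<bar>" using L[OF s(1) t(1)] by auto
    also have "\<dots> \<le> M * (d - c)" using s t M0 by (intro mult_left_mono) auto
    finally show "norm (u - w) \<le> M * (d - c)" using s t by (simp add: abs_minus_commute)
  qed
  have t3: "m * infdist \<tau> {c<..<d} \<le> infdist (v \<tau>) (interior (v ` {c..d}))"
  proof -
    have ne: "interior (v ` {c..d}) \<noteq> {}" using U pq' by auto
    have "m * infdist \<tau> {c<..<d} \<le> dist (v \<tau>) u" if u: "u \<in> interior (v ` {c..d})" for u
    proof -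
      have "u \<in> v ` {c..d}" using u interior_subset by blast
      then obtain z where z: "z \<in> {c..d}" "u = v z" by auto
      have "infdist z {c<..<d} = 0"
        using in_closure_iff_infdist_zero[of "{c<..<d}" z] z cd by simp
      then have "infdist \<tau> {c<..<d} \<le> dist \<tau> z"
        using infdist_triangle[of \<tau> "{c<..<d}" z] by simp
      then have "m * infdist \<tau> {c<..<d} \<le> m * \<bar>\<tau> - z\<bar>"
        using m by (simp add: dist_real_def)
      also have "\<dots> \<le> \<bar>v \<tau> - v z\<bar>"
        using lip[OF dv up lo, of z \<tau>] z tau cd by (simp add: abs_minus_commute)
      finally show ?thesis using z by (simp add: dist_real_def)
    qed
    then show ?thesis
      unfolding infdist_notempty[OF ne] by (intro cINF_greatest ne) auto
  qed
  show ?thesis using t1 t2 t3 by blast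
qed


theorem lemma6:
  fixes f g :: "real \<Rightarrow> real"
    and Jf :: "'i set" and af bf :: "'i \<Rightarrow> real" and fhf :: "'i \<Rightarrow> real \<Rightarrow> real"
    and Jg :: "'j set" and ag bg :: "'j \<Rightarrow> real" and fhg :: "'j \<Rightarrow> real \<Rightarrow> real"
  assumes "full_branch_markov f Jf af bf fhf"
    and "full_branch_markov g Jg ag bg fhg"
    and "partition_spacing (branches Jf af bf)"
    and "partition_spacing (branches Jg ag bg)"
    and "bounded_distortion Jf af bf fhf"
    and "uniformly_expanding g Jg ag bg"
  shows "partition_spacing (comp_branches Jf af bf fhf Jg ag bg fhg)"
proof -
  have Fab: "\<forall>i\<in>Jf. -1 \<le> af i \<and> af i < bf i \<and> bf i \<le> 1"
    using assms(1) by (simp add: full_branch_markov_def)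
  have Fbij: "\<forall>i\<in>Jf. bij_betw (fhf i) {af i..bf i} {-1..1}"
    using assms(1) by (simp add: full_branch_markov_def)
  have FC2: "\<forall>i\<in>Jf. C2_on_interval (fhf i) (af i) (bf i)"
    using assms(1) by (simp add: full_branch_markov_def)
  have Gab: "\<forall>i\<in>Jg. -1 \<le> ag i \<and> ag i < bg i \<and> bg i \<le> 1"
    using assms(2) by (simp add: full_branch_markov_def)
  have Gbij: "\<forall>i\<in>Jg. bij_betw (fhg i) {ag i..bg i} {-1..1}"
    using assms(2) by (simp add: full_branch_markov_def)
  obtain Xf where Xf: "\<And>U \<sigma>. U \<in> branches Jf af bf \<Longrightarrow> \<sigma> \<in> {-1,1::real} \<Longrightarrow> \<sigma> \<notin> closure U
      \<Longrightarrow> diameter U / infdist \<sigma> U \<le> Xf"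
    using assms(3) unfolding partition_spacing_def by blast
  obtain Xg where Xg: "\<And>U \<sigma>. U \<in> branches Jg ag bg \<Longrightarrow> \<sigma> \<in> {-1,1::real} \<Longrightarrow> \<sigma> \<notin> closure U
      \<Longrightarrow> diameter U / infdist \<sigma> U \<le> Xg"
    using assms(4) unfolding partition_spacing_def by blast
  obtain C0 where C0: "\<And>i. i \<in> Jf \<Longrightarrow> \<exists>v1 v2. \<forall>x\<in>{-1..1}.
        (inv_branch af bf fhf i has_real_derivative v1 x) (at x within {-1..1}) \<and>
        (v1 has_real_derivative v2 x) (at x within {-1..1}) \<and>
        \<bar>v2 x / v1 x\<bar> \<le> C0"
    using assms(5) unfolding bounded_distortion_def by blast
  define C where "C = max C0 0"
  have Cnn: "0 \<le> C" unfolding C_def by simp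
  define K where "K = exp (2 * C)"
  have K0: "0 < K" unfolding K_def by simp
  define X where "X = max 0 (max Xf (K * K * Xg))"
  show ?thesis unfolding partition_spacing_def
  proof (intro exI[of _ X] ballI impI)
    fix U \<sigma> assume U: "U \<in> comp_branches Jf af bf fhf Jg ag bg fhg"
      and s: "\<sigma> \<in> {-1, 1::real}" and sU: "\<sigma> \<notin> closure U"
    obtain \<phi> \<gamma> where phi: "\<phi> \<in> Jf" and gam: "\<gamma> \<in> Jg"
      and Ueq: "U = interior (inv_branch af bf fhf \<phi> ` (inv_branch ag bg fhg \<gamma> ` {-1..1}))"
      using U unfolding comp_branches_def by blast
    define c where "c = ag \<gamma>"
    define d where "d = bg \<gamma>"
    define v where "v = inv_branch af bf fhf \<phi>"
    have cd: "-1 \<le> c" "c < d" "d \<le> 1" using Gab gam unfolding c_def d_def by auto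
    have bijg: "bij_betw (fhg \<gamma>) {c..d} {-1..1}" using Gbij gam unfolding c_def d_def by auto
    have "inv_branch ag bg fhg \<gamma> ` {-1..1} = {c..d}"
      using bij_betw_inv_into[OF bijg] unfolding inv_branch_def c_def d_def bij_betw_def by auto
    then have Ueq2: "U = interior (v ` {c..d})" using Ueq v_def by simp
    have bijf: "bij_betw (fhf \<phi>) {af \<phi>..bf \<phi>} {-1..1}" using Fbij phi by auto
    have vimg: "v ` {-1..1} = {af \<phi>..bf \<phi>}"
      using bij_betw_inv_into[OF bijf] unfolding inv_branch_def v_def bij_betw_def by auto
    have abf: "-1 \<le> af \<phi>" "af \<phi> < bf \<phi>" "bf \<phi> \<le> 1" using Fab phi by auto
    obtain d1 d2 where dh: "\<And>y. y \<in> {af \<phi>..bf \<phi>} \<Longrightarrow>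
        (fhf \<phi> has_real_derivative d1 y) (at y within {af \<phi>..bf \<phi>})"
      using FC2 phi unfolding C2_on_interval_def by blast
    obtain v1 v2 where vd: "\<And>x. x \<in> {-1..1} \<Longrightarrow>
        (v has_real_derivative v1 x) (at x within {-1..1}) \<and>
        (v1 has_real_derivative v2 x) (at x within {-1..1}) \<and> \<bar>v2 x / v1 x\<bar> \<le> C0"
      using C0[OF phi] unfolding v_def by blast
    have dv: "\<And>t. t \<in> {-1..1} \<Longrightarrow> (v has_real_derivative v1 t) (at t within {-1..1})"
      using vd by blast
    have nz: "\<And>t. t \<in> {-1<..<1} \<Longrightarrow> v1 t \<noteq> 0"
    proof -
      fix t :: real assume t: "t \<in> {-1<..<1}"
      show "v1 t \<noteq> 0"
        by (rule inv_deriv_nonzero[OF bijf dh _ t])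
           (use dv[of t] t in \<open>auto simp: v_def inv_branch_def\<close>)
    qed
    have dist_b: "\<And>x y. x \<in> {-1<..<1} \<Longrightarrow> y \<in> {-1<..<1} \<Longrightarrow> \<bar>v1 x\<bar> \<le> K * \<bar>v1 y\<bar>"
    proof -
      fix x y :: real assume x: "x \<in> {-1<..<1}" and y: "y \<in> {-1<..<1}"
      have Cb: "\<And>t. t \<in> {-1..1} \<Longrightarrow> \<bar>v2 t / v1 t\<bar> \<le> C"
      proof -
        fix t :: real assume "t \<in> {-1..1}"
        then have "\<bar>v2 t / v1 t\<bar> \<le> C0" using vd by blast
        then show "\<bar>v2 t / v1 t\<bar> \<le> C" unfolding C_def by linarith
      qed
      have d12: "\<And>t. t \<in> {-1..1} \<Longrightarrow> (v1 has_real_derivative v2 t) (at t within {-1..1})"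
        using vd by blast
      show "\<bar>v1 x\<bar> \<le> K * \<bar>v1 y\<bar>" unfolding K_def
        by (rule distortion[OF d12 Cb nz x y Cnn])
    qed
    define A where "A = \<bar>v1 0\<bar>"
    have A0: "0 < A" using nz[of 0] unfolding A_def by auto
    have up: "\<And>t. t \<in> {-1<..<1} \<Longrightarrow> \<bar>v1 t\<bar> \<le> K * A"
      using dist_b[of _ 0] unfolding A_def by auto
    have lo: "\<And>t. t \<in> {-1<..<1} \<Longrightarrow> A / K \<le> \<bar>v1 t\<bar>"
      using dist_b[of 0] K0 unfolding A_def by (auto simp: divide_le_eq mult.commute)
    have X0: "0 \<le> X" unfolding X_def by simp
    show "diameter U / infdist \<sigma> U \<le> X"
    proof (cases "\<sigma> \<in> {af \<phi>..bf \<phi>}")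
      case True
      then obtain \<tau> where tau: "\<tau> \<in> {-1..1}" and vt: "v \<tau> = \<sigma>" using vimg by force
      have tau1: "\<tau> \<in> {-1, 1}"
      proof (rule ccontr)
        assume "\<tau> \<notin> {-1, 1}"
        then have ti: "\<tau> \<in> {-1<..<1}" using tau by auto
        have "at \<tau> within {-1..1} = at \<tau>" using ti by (intro at_within_interior) simp
        then have D: "DERIV v \<tau> :> v1 \<tau>" using dv[OF tau] by simp
        define e where "e = min (\<tau> + 1) (1 - \<tau>)"
        have e0: "0 < e" using ti unfolding e_def by auto
        have near: "\<And>y. \<bar>\<tau> - y\<bar> < e \<Longrightarrow> v y \<in> {-1..1}"
        proof -
          fix y assume "\<bar>\<tau> - y\<bar> < e"
          then have "y \<in> {-1..1}" unfolding e_def by auto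
          then have "v y \<in> {af \<phi>..bf \<phi>}" using vimg by blast
          then show "v y \<in> {-1..1}" using abf by auto
        qed
        have "v1 \<tau> = 0"
        proof (cases "\<sigma> = -1")
          case True
          show ?thesis
            by (rule DERIV_local_min[OF D e0]) (use near vt True in auto)
        next
          case False
          then have "\<sigma> = 1" using s by auto
          then show ?thesis
            by (intro DERIV_local_max[OF D e0]) (use near vt in auto)
        qed
        then show False using nz[OF ti] by simp
      qed
      have cb: "\<tau> \<notin> {c..d} \<and> diameter (interior (v ` {c..d})) \<le> (K * A) * (d - c) \<and>
         (A / K) * infdist \<tau> {c<..<d} \<le> infdist (v \<tau>) (interior (v ` {c..d}))"
        by (rule comp_branch_bound[OF dv up lo _ cd tau])
           (use A0 K0 sU vt Ueq2 in auto)
      define \<delta> where "\<delta> = infdist \<tau> {c<..<d}"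
      have Ob: "{c<..<d} \<in> branches Jg ag bg"
        unfolding branches_def c_def d_def using gam by auto
      have tc: "\<tau> \<notin> closure {c<..<d}" using cb cd by simp
      have dpos: "0 < \<delta>"
        using in_closure_iff_infdist_zero[of "{c<..<d}" \<tau>] tc cd infdist_nonneg[of \<tau> "{c<..<d}"]
        unfolding \<delta>_def by auto
      have "(d - c) / \<delta> \<le> Xg" using Xg[OF Ob tau1 tc] cd unfolding \<delta>_def by simp
      then have dc: "d - c \<le> Xg * \<delta>" using dpos by (simp add: divide_le_eq)
      have Xg0: "0 \<le> Xg" using dc cd dpos by (smt (verit) mult_nonpos_nonneg)
      have ip: "(A / K) * \<delta> \<le> infdist \<sigma> U" using cb vt Ueq2 unfolding \<delta>_def by simp
      have ipos: "0 < infdist \<sigma> U"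
        using ip A0 K0 dpos by (smt (verit) divide_pos_pos mult_pos_pos)
      have "diameter U \<le> (K * A) * (d - c)" using cb Ueq2 by simp
      also have "\<dots> \<le> (K * A) * (Xg * \<delta>)"
        using dc A0 K0 by (intro mult_left_mono) auto
      also have "\<dots> = (K * K * Xg) * ((A / K) * \<delta>)" using K0 by (simp add: field_simps)
      also have "\<dots> \<le> (K * K * Xg) * infdist \<sigma> U"
        using ip Xg0 K0 by (intro mult_left_mono) auto
      finally have "diameter U / infdist \<sigma> U \<le> K * K * Xg"
        using ipos by (simp add: divide_le_eq)
      then show ?thesis unfolding X_def by linarith
    next
      case False
      show ?thesis
      proof (cases "U = {}")
        case True then show ?thesis using X0 by simp
      next
        case ne: False
        have "v ` {c..d} \<subseteq> {af \<phi>..bf \<phi>}" using vimg cd by auto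
        then have sub: "U \<subseteq> {af \<phi><..<bf \<phi>}"
          using interior_mono[of "v ` {c..d}" "{af \<phi>..bf \<phi>}"] Ueq2 by simp
        have Ob: "{af \<phi><..<bf \<phi>} \<in> branches Jf af bf"
          unfolding branches_def using phi by auto
        have sc: "\<sigma> \<notin> closure {af \<phi><..<bf \<phi>}" using False abf by simp
        have r: "(bf \<phi> - af \<phi>) / infdist \<sigma> {af \<phi><..<bf \<phi>} \<le> Xf"
          using Xf[OF Ob s sc] abf by simp
        have ipos: "0 < infdist \<sigma> {af \<phi><..<bf \<phi>}"
          using in_closure_iff_infdist_zero[of "{af \<phi><..<bf \<phi>}" \<sigma>] sc abf
            infdist_nonneg[of \<sigma> "{af \<phi><..<bf \<phi>}"] by auto
        have im: "infdist \<sigma> {af \<phi><..<bf \<phi>} \<le> infdist \<sigma> U"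
          by (rule infdist_mono[OF sub ne])
        have dm: "diameter U \<le> bf \<phi> - af \<phi>"
          using diameter_subset[OF sub] abf by simp
        have "diameter U / infdist \<sigma> U \<le> (bf \<phi> - af \<phi>) / infdist \<sigma> {af \<phi><..<bf \<phi>}"
          by (rule frac_le) (use dm ipos im abf in auto)
        then show ?thesis using r unfolding X_def by linarith
      qed
    qed
  qed
qed

end
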